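(* Let $X$ be a random variable geometrically distributed with parameter $f \in (0,1]$, i.e. $\Pr[X = k] = (1-f)^{k-1} f$ for $k \in \{1,2,\dots\}$. Then with $d_1 = 4/\pi$, $$\sqrt{\mathbb{E}[X]} \le \mathbb{E}\left[\sqrt{d_1 X}\right]$$ for all $f \in (0,1]$. *)

theory Defs
  imports "HOL-Probability.Probability"
begin

end

theory Submission
  imports Defs "HOL-Analysis.Analysis"
begin

lemma expect_nat_sums:
  fixes M :: "'a measure" and X :: "'a \<Rightarrow> nat" and g :: "nat \<Rightarrow> real"
  assumes P: "prob_space M"
    and X: "X \<in> measurable M (count_space UNIV)"
    and g: "\<And>k. 0 \<le> g k"
    and s: "(\<lambda>k. g k * measure M {\<omega> \<in> space M. X \<omega> = k}) sums s"
  shows "prob_space.expectation M (\<lambda>\<omega>. g (X \<omega>)) = s"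
proof -
  interpret prob_space M by fact
  let ?A = "\<lambda>k. {\<omega> \<in> space M. X \<omega> = k}"
  have A: "?A k \<in> sets M" for k
    using X by (simp add: measurable_count_space_eq2)
  have meas: "(\<lambda>\<omega>. g (X \<omega>)) \<in> borel_measurable M"
    using X by (intro measurable_compose[OF X]) auto
  have "integral\<^sup>L M (\<lambda>\<omega>. g (X \<omega>)) = enn2real (\<integral>\<^sup>+ \<omega>. ennreal (g (X \<omega>)) \<partial>M)"
    by (rule integral_eq_nn_integral[OF meas]) (simp add: g)
  also have "(\<integral>\<^sup>+ \<omega>. ennreal (g (X \<omega>)) \<partial>M)
      = (\<integral>\<^sup>+ \<omega>. (\<Sum>k. ennreal (g k) * indicator (?A k) \<omega>) \<partial>M)"
  proof (rule nn_integral_cong)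
    fix \<omega> assume "\<omega> \<in> space M"
    then have "\<omega> \<in> ?A (X \<omega>)" by simp
    moreover have "disjoint_family ?A" by (auto simp: disjoint_family_on_def)
    ultimately show "ennreal (g (X \<omega>)) = (\<Sum>k. ennreal (g k) * indicator (?A k) \<omega>)"
      by (simp add: suminf_cmult_indicator)
  qed
  also have "\<dots> = (\<Sum>k. \<integral>\<^sup>+ \<omega>. ennreal (g k) * indicator (?A k) \<omega> \<partial>M)"
    by (rule nn_integral_suminf) (use A in auto)
  also have "\<dots> = (\<Sum>k. ennreal (g k * measure M (?A k)))"
  proof (rule suminf_cong)
    fix k
    have "(\<integral>\<^sup>+ \<omega>. ennreal (g k) * indicator (?A k) \<omega> \<partial>M) = ennreal (g k) * emeasure M (?A k)"
      using A by (rule nn_integral_cmult_indicator)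
    also have "\<dots> = ennreal (g k) * ennreal (measure M (?A k))"
      by (simp only: emeasure_eq_measure)
    also have "\<dots> = ennreal (g k * measure M (?A k))"
      by (rule ennreal_mult''[symmetric]) (rule measure_nonneg)
    finally show "(\<integral>\<^sup>+ \<omega>. ennreal (g k) * indicator (?A k) \<omega> \<partial>M) = ennreal (g k * measure M (?A k))" .
  qed
  also have "\<dots> = ennreal s"
    by (rule suminf_ennreal_eq[OF _ s]) (simp add: g)
  finally have eq: "integral\<^sup>L M (\<lambda>\<omega>. g (X \<omega>)) = enn2real (ennreal s)" .
  have "0 \<le> suminf (\<lambda>k. g k * measure M (?A k))"
    by (rule suminf_nonneg[OF sums_summable[OF s]]) (simp add: g)
  then have "0 \<le> s" using sums_unique[OF s] by simp
  then show ?thesis using eq by simp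
qed

lemma gamma_half_bound:
  fixes x :: real assumes x: "0 < x"
  shows "Gamma (x + 1/2) \<le> sqrt x * Gamma x"
proof -
  have c: "convex_on {0<..} (ln \<circ> Gamma :: real \<Rightarrow> real)" by (rule log_convex_Gamma_real)
  have "(ln \<circ> Gamma) ((1 - 1/2) *\<^sub>R x + (1/2) *\<^sub>R (x+1)) \<le> (1 - 1/2) * (ln \<circ> Gamma) x + (1/2) * (ln \<circ> Gamma) (x+1)"
    by (rule convex_onD[OF c]) (use x in auto)
  moreover have "(1 - 1/2) *\<^sub>R x + (1/2) *\<^sub>R (x+1) = x + 1/2" by (simp add: field_simps)
  ultimately have h: "ln (Gamma (x + 1/2)) \<le> (1/2) * ln (Gamma x) + (1/2) * ln (Gamma (x+1))"
    by simp
  have G1: "Gamma (x+1) = x * Gamma x" using x by (subst Gamma_plus1) (auto elim!: nonpos_Ints_cases)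
  have gp: "0 < Gamma x" using x by (rule Gamma_real_pos)
  have gp2: "0 < Gamma (x + 1/2)" using x by (intro Gamma_real_pos) simp
  have "ln (Gamma (x+1)) = ln x + ln (Gamma x)" unfolding G1 by (rule ln_mult_pos[OF x gp])
  with h have "ln (Gamma (x + 1/2)) \<le> ln (Gamma x) + ln x / 2" by linarith
  then have "exp (ln (Gamma (x + 1/2))) \<le> exp (ln (Gamma x) + ln x / 2)" by (rule exp_mono)
  also have "\<dots> = Gamma x * exp (ln x / 2)" using gp by (simp add: exp_add)
  also have "exp (ln x / 2) = sqrt x"
  proof -
    have "x powr (1/2) = exp (1/2 * ln x)" using x by (simp add: powr_def)
    then show ?thesis using x by (simp add: powr_half_sqrt)
  qed
  finally show ?thesis using gp2 by (simp add: mult.commute)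
qed

theorem lemma7:
  fixes M :: "'a measure" and X :: "'a \<Rightarrow> nat" and f :: real
  assumes "prob_space M"
    and "X \<in> measurable M (count_space UNIV)"
    and "0 < f" and "f \<le> 1"
    and "\<And>k. k \<ge> 1 \<Longrightarrow>
           measure M {\<omega> \<in> space M. X \<omega> = k} = (1 - f) ^ (k - 1) * f"
  shows "sqrt (prob_space.expectation M (\<lambda>\<omega>. real (X \<omega>)))
           \<le> prob_space.expectation M (\<lambda>\<omega>. sqrt ((4 / pi) * real (X \<omega>)))"
proof -
  define q where "q = 1 - f"
  have q0: "0 \<le> q" and q1: "q < 1" using assms by (auto simp: q_def)
  let ?p = "\<lambda>k. measure M {\<omega> \<in> space M. X \<omega> = k}"
  have pS: "?p (Suc n) = q ^ n * f" for n using assms(5)[of "Suc n"] by (simp add: q_def)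
  define c where "c = 4 / pi"
  have c1: "1 \<le> c" using pi_less_4 by (simp add: c_def)
  have geo: "(\<lambda>n. of_nat (Suc n) * q ^ n) sums (1 / (1 - q)^2)"
    by (rule geometric_deriv_sums) (use q0 q1 in simp)
  have s1: "(\<lambda>n. real (Suc n) * ?p (Suc n)) sums (1 / f)"
  proof -
    have "(\<lambda>n. of_nat (Suc n) * q ^ n * f) sums (1 / (1 - q)^2 * f)"
      by (rule sums_mult2[OF geo])
    also have "1 / (1 - q)^2 * f = 1 / f" using assms(3) by (simp add: q_def power2_eq_square)
    finally show ?thesis by (simp add: pS mult.assoc)
  qed
  have EX: "prob_space.expectation M (\<lambda>\<omega>. real (X \<omega>)) = 1 / f"
  proof -
    have "(\<lambda>n. (\<lambda>k. real k * ?p k) (Suc n)) sums (1/f)" using s1 by simp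
    from sums_Suc_iff[THEN iffD1, OF this] have "(\<lambda>k. real k * ?p k) sums (1/f)" by simp
    then show ?thesis using expect_nat_sums[OF assms(1,2), of real] by simp
  qed
  define a where "a n = pochhammer (3/2::real) n / fact n" for n
  have bin: "(\<lambda>n. a n * q ^ n) sums (f powr (-3/2))"
  proof -
    have "(\<lambda>n. ((-3/2::real) gchoose n) * (-q)^n) sums (1 + -q) powr (-3/2)"
      by (rule gen_binomial_real) (use q0 q1 in simp)
    moreover have "((-3/2::real) gchoose n) * (-q)^n = a n * q ^ n" for n
    proof -
      have g: "((-3/2::real) gchoose n) = (-1)^n * a n"
        unfolding gbinomial_pochhammer a_def by simp
      have m: "(-q)^n = (-1)^n * q^n" by (rule power_minus)
      have o: "(-1::real)^n * (-1)^n = 1"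
        by (simp flip: power_mult_distrib)
      have "((-3/2::real) gchoose n) * (-q)^n = ((-1)^n * (-1)^n) * (a n * q ^ n)"
        unfolding g m by (simp only: mult_ac)
      then show ?thesis unfolding o by simp
    qed
    ultimately show ?thesis by (simp add: q_def)
  qed
  have G32: "Gamma (3/2::real) = sqrt pi / 2"
  proof -
    have "(1/2::real) \<notin> \<int>\<^sub>\<le>\<^sub>0" by (auto elim!: nonpos_Ints_cases)
    then show ?thesis using Gamma_plus1[of "1/2::real"] Gamma_one_half_real by simp
  qed
  have abound: "sqrt pi / 2 * a n \<le> sqrt (real n + 1)" for n
  proof -
    have "pochhammer (3/2::real) n = Gamma (3/2 + real n) / Gamma (3/2)"
      by (rule pochhammer_Gamma) (auto elim!: nonpos_Ints_cases)
    moreover have "fact n = Gamma (real n + 1)" using Gamma_fact[of n, where ?'a=real] by (simp add: add.commute)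
    ultimately have "sqrt pi / 2 * a n = Gamma ((real n + 1) + 1/2) / Gamma (real n + 1)"
      using G32 by (simp add: a_def add_ac)
    also have "\<dots> \<le> sqrt (real n + 1)"
      using gamma_half_bound[of "real n + 1"] Gamma_real_pos[of "real n + 1"]
      by (simp add: divide_le_eq)
    finally show ?thesis .
  qed
  let ?t = "\<lambda>n. sqrt (c * real (Suc n)) * ?p (Suc n)"
  have tnn: "0 \<le> ?t n" for n using pS q0 assms(3) c1 by simp
  have tsum: "summable ?t"
  proof (rule summable_comparison_test[OF _ summable_mult[OF sums_summable[OF s1], of c]])
    show "\<exists>N. \<forall>n\<ge>N. norm (?t n) \<le> c * (real (Suc n) * ?p (Suc n))"
    proof (intro exI allI impI)
      fix n :: nat
      have y1: "1 \<le> c * real (Suc n)" using mult_mono[of 1 c 1 "real (Suc n)"] c1 by simp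
      then have "1 \<le> sqrt (c * real (Suc n))" by simp
      then have "sqrt (c * real (Suc n)) * 1 \<le> sqrt (c * real (Suc n)) * sqrt (c * real (Suc n))"
        by (intro mult_left_mono) auto
      then have "sqrt (c * real (Suc n)) \<le> c * real (Suc n)" using y1 by simp
      moreover have "0 \<le> q ^ n * f" using q0 assms(3) by simp
      ultimately have "sqrt (c * real (Suc n)) * (q ^ n * f) \<le> (c * real (Suc n)) * (q ^ n * f)"
        by (rule mult_right_mono)
      then show "norm (?t n) \<le> c * (real (Suc n) * ?p (Suc n))"
        using tnn[of n] unfolding pS[of n] by (simp add: mult.assoc)
    qed
  qed
  have lower: "(\<lambda>n. a n * q ^ n * f) sums (f powr (-3/2) * f)" by (rule sums_mult2[OF bin])
  have tle: "a n * q ^ n * f \<le> ?t n" for n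
  proof -
    have "a n = sqrt c * (sqrt pi / 2 * a n)"
      using pi_gt_zero by (simp add: c_def real_sqrt_divide)
    also have "\<dots> \<le> sqrt c * sqrt (real n + 1)"
      using abound[of n] c1 by (intro mult_left_mono) auto
    also have "\<dots> = sqrt (c * real (Suc n))" by (simp add: real_sqrt_mult add.commute)
    finally show ?thesis using pS[of n] q0 assms(3)
      by (simp add: mult.assoc mult_right_mono)
  qed
  have "f powr (-3/2) * f \<le> suminf ?t"
    by (rule sums_le[OF tle lower summable_sums[OF tsum]])
  moreover have "f powr (-3/2) * f = sqrt (1 / f)"
  proof -
    have "f powr (-3/2) * f = f powr (-3/2) * f powr 1" using assms(3) by simp
    also have "\<dots> = f powr (-(1/2))" unfolding powr_add[symmetric] by simp
    also have "\<dots> = 1 / f powr (1/2)" by (simp add: powr_minus_divide)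
    also have "\<dots> = sqrt (1 / f)" using assms(3) by (simp add: powr_half_sqrt real_sqrt_divide)
    finally show ?thesis .
  qed
  moreover have "prob_space.expectation M (\<lambda>\<omega>. sqrt ((4 / pi) * real (X \<omega>))) = suminf ?t"
  proof -
    have "(\<lambda>n. (\<lambda>k. sqrt (c * real k) * ?p k) (Suc n)) sums suminf ?t" using summable_sums[OF tsum] by simp
    from sums_Suc_iff[THEN iffD1, OF this] have "(\<lambda>k. sqrt (c * real k) * ?p k) sums suminf ?t" by simp
    then show ?thesis using expect_nat_sums[OF assms(1,2), of "\<lambda>k. sqrt (c * real k)"] c1 by (simp add: c_def)
  qed
  ultimately show ?thesis using EX by simp
qed

end
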